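(* Let $S$ be a smooth projective surface with $b_1(S)=0$, $p_g(S)>0$, let $\pi:\widetilde S\to S$ be the blow-up at one point with exceptional divisor $E$, let $c_1\in H^2(S,\mathbb{Z})$, $\ell\in\{0,1,2\}$, and $\widetilde c_1=\pi^*c_1-\ell E$. Let $\mathrm{SW}$ be the Seiberg–Witten invariants of $S$ and define those of $\widetilde S$ by $\widetilde{\mathrm{SW}}(\pi^*a)=\widetilde{\mathrm{SW}}(\pi^*a+E)=\mathrm{SW}(a)$ for $a\in H^2(S,\mathbb{Z})$, and $\widetilde{\mathrm{SW}}=0$ on all other classes. With $\mathsf{Z}^{\mathrm{inst}}$ defined as in the context (using $\widetilde{\mathrm{SW}}$, $K_{\widetilde S}=\pi^*K_S+E$, $\chi(\mathcal{O}_{\widetilde S})=\chi(\mathcal{O}_S)$ for $\widetilde S$), one has $$\mathsf{Z}^{\mathrm{inst}}_{\widetilde S,\widetilde c_1}(x,y)=\begin{cases}\dfrac{\Theta_{A_2,(0,0)}(x^3,y)}{\overline\eta(x^6)^3}\,\mathsf{Z}^{\mathrm{inst}}_{S,c_1}(x,y),&\ell=0,\\[2ex]\dfrac{\Theta_{A_2,(1,0)}(x^3,y)}{\overline\eta(x^6)^3}\,\mathsf{Z}^{\mathrm{inst}}_{S,c_1}(x,y),&\ell=1,2.\end{cases}$$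
   Context: $\epsilon=e^{2\pi i/3}$. For a surface $X$ with invariants $\chi=\chi(\mathcal{O}_X)$, canonical class $K$, Seiberg–Witten function $\mathrm{SW}$ (finitely supported on $H^2(X,\mathbb{Z})$), and $c\in H^2(X,\mathbb{Z})$, define $\psi_{X,c}(x,y):=9\Big(\frac{1}{3\prod_{n\ge1}(1-x^{2n})^{10}(1-x^{2n}y)(1-x^{2n}y^{-1})}\Big)^{\chi}\Big(\frac{\Theta_{A_2^\vee,(0,1)}(x,y)}{3\overline{\eta}(x^6)^3}\Big)^{-K^2}\sum_{a,b\in H^2(X,\mathbb{Z})}\mathrm{SW}(a)\mathrm{SW}(b)\epsilon^{(a-b)c}Z_+(x,y)^{ab}Z_-(x,y)^{(K-a)(K-b)}$, and writing $\psi_{X,c}=\sum_n\psi_n(y)x^n$, set $\mathsf{Z}^{\mathrm{inst}}_{X,c}(x,y):=\sum_{n\equiv-2c^2-8\chi\ (\mathrm{mod}\ 3)}\psi_n(y)x^n=\frac13\sum_{k=0}^2\epsilon^{k(2c^2+8\chi)}\psi_{X,c}(\epsilon^kx,y)$. Here $\overline\eta(x)=\prod_{n\ge1}(1-x^n)$; $\Theta_{A_2,(0,0)}(x,y)=\sum_{(m,n)\in\mathbb{Z}^2}x^{2(m^2-mn+n^2)}y^{m+n}$, $\Theta_{A_2,(1,0)}(x,y)=\sum_{(m,n)}x^{2(m^2-mn+n^2+m-n+\frac13)}y^{m+n}$, $\Theta_{A_2^\vee,(0,0)}(x,y)=\sum_{(m,n)}x^{2(m^2+mn+n^2)}y^{m+n}$,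 $\Theta_{A_2^\vee,(0,1)}(x,y)=\sum_{(m,n)}\epsilon^{m-n}x^{2(m^2+mn+n^2)}y^{m+n}$; $Z=\Theta_{A_2^\vee,(0,0)}/\Theta_{A_2^\vee,(0,1)}$ and $Z_\pm(x,y)$ are the two roots in $\zeta$ of $\zeta^2-(Z(x,y)^2+3Z(x,y)Z(x,1))\zeta+Z(x,y)+3Z(x,1)=0$. (Under the paper's Conjecture 1, $\mathsf{Z}^{\mathrm{inst}}_{X,c}(x,y)=\sum_{c_2}\overline\chi^{\mathrm{vir}}_{-y}(M_X^H(3,c,c_2))x^{\mathrm{vd}}$.) *)

theory Defs
  imports "HOL-Analysis.Analysis"
begin

text \<open>All generating functions are modelled as complex-valued functions of complex
  variables x, y (x near 0, y nonzero); the formal-series identity of the paper is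
  rendered as an identity of these functions on a neighbourhood of x = 0, for every y.\<close>

definition eps :: complex where
  "eps = exp (2 * pi * \<i> / 3)"

definition etabar :: "complex \<Rightarrow> complex" where
  "etabar x = prodinf (\<lambda>n. 1 - x ^ (n + 1))"

definition theta_A2_00 :: "complex \<Rightarrow> complex \<Rightarrow> complex" where
  "theta_A2_00 x y = infsum (\<lambda>(m::int, n::int).
      x ^ nat (2 * (m^2 - m*n + n^2)) * y powi (m + n)) UNIV"

text \<open>Theta_{A2,(1,0)}(x^3,y) = sum over (m,n) of x^(6(m^2-mn+n^2+m-n+1/3)) y^(m+n)
  = sum of x^(6(m^2-mn+n^2+m-n)+2) y^(m+n) (the exponent is a nonnegative integer).
  Only the evaluation at x^3 occurs in the theorem, so we define that function directly.\<close>
definition theta_A2_10_cube :: "complex \<Rightarrow> complex \<Rightarrow> complex" where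
  "theta_A2_10_cube x y = infsum (\<lambda>(m::int, n::int).
      x ^ nat (6 * (m^2 - m*n + n^2 + m - n) + 2) * y powi (m + n)) UNIV"

definition theta_A2d_00 :: "complex \<Rightarrow> complex \<Rightarrow> complex" where
  "theta_A2d_00 x y = infsum (\<lambda>(m::int, n::int).
      x ^ nat (2 * (m^2 + m*n + n^2)) * y powi (m + n)) UNIV"

definition theta_A2d_01 :: "complex \<Rightarrow> complex \<Rightarrow> complex" where
  "theta_A2d_01 x y = infsum (\<lambda>(m::int, n::int).
      eps powi (m - n) * x ^ nat (2 * (m^2 + m*n + n^2)) * y powi (m + n)) UNIV"

definition Zfun :: "complex \<Rightarrow> complex \<Rightarrow> complex" where
  "Zfun x y = theta_A2d_00 x y / theta_A2d_01 x y"

text \<open>Zp, Zm are the two roots in zeta of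
  zeta^2 - (Z(x,y)^2 + 3 Z(x,y) Z(x,1)) zeta + Z(x,y) + 3 Z(x,1) = 0, at every point.\<close>
definition roots_Zpm :: "(complex \<Rightarrow> complex \<Rightarrow> complex) \<Rightarrow> (complex \<Rightarrow> complex \<Rightarrow> complex) \<Rightarrow> bool" where
  "roots_Zpm Zp Zm \<longleftrightarrow> (\<forall>x y.
      Zp x y + Zm x y = (Zfun x y)^2 + 3 * Zfun x y * Zfun x 1 \<and>
      Zp x y * Zm x y = Zfun x y + 3 * Zfun x 1)"

definition pref_chi :: "complex \<Rightarrow> complex \<Rightarrow> complex" where
  "pref_chi x y = 1 / (3 * prodinf (\<lambda>n. (1 - x ^ (2 * (n + 1))) ^ 10
        * (1 - x ^ (2 * (n + 1)) * y) * (1 - x ^ (2 * (n + 1)) * inverse y)))"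

text \<open>Lattice data of a surface: H^2(X,Z) is the type 'a, the intersection form is B,
  canonical class K, chi = chi(O_X), Seiberg-Witten function SW (finitely supported).\<close>
definition intersection_form :: "('a::ab_group_add \<Rightarrow> 'a \<Rightarrow> int) \<Rightarrow> bool" where
  "intersection_form B \<longleftrightarrow> (\<forall>a b. B a b = B b a) \<and>
      (\<forall>a b c. B (a + b) c = B a c + B b c)"

definition psi :: "('a::ab_group_add \<Rightarrow> 'a \<Rightarrow> int) \<Rightarrow> 'a \<Rightarrow> int \<Rightarrow> ('a \<Rightarrow> int)
    \<Rightarrow> (complex \<Rightarrow> complex \<Rightarrow> complex) \<Rightarrow> (complex \<Rightarrow> complex \<Rightarrow> complex)
    \<Rightarrow> 'a \<Rightarrow> complex \<Rightarrow> complex \<Rightarrow> complex" where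
  "psi B K chi SW Zp Zm c x y =
     9 * (pref_chi x y) powi chi
       * (theta_A2d_01 x y / (3 * (etabar (x ^ 6)) ^ 3)) powi (- B K K)
       * (\<Sum>a\<in>{a. SW a \<noteq> 0}. \<Sum>b\<in>{b. SW b \<noteq> 0}.
            of_int (SW a * SW b) * eps powi (B (a - b) c)
            * (Zp x y) powi (B a b) * (Zm x y) powi (B (K - a) (K - b)))"

definition Zinst :: "('a::ab_group_add \<Rightarrow> 'a \<Rightarrow> int) \<Rightarrow> 'a \<Rightarrow> int \<Rightarrow> ('a \<Rightarrow> int)
    \<Rightarrow> (complex \<Rightarrow> complex \<Rightarrow> complex) \<Rightarrow> (complex \<Rightarrow> complex \<Rightarrow> complex)
    \<Rightarrow> 'a \<Rightarrow> complex \<Rightarrow> complex \<Rightarrow> complex" where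
  "Zinst B K chi SW Zp Zm c x y =
     (1 / 3) * (\<Sum>k<(3::nat). eps powi (int k * (2 * B c c + 8 * chi))
                  * psi B K chi SW Zp Zm c (eps ^ k * x) y)"

text \<open>Blow-up at a point: H^2(S~,Z) = H^2(S,Z) + Z E, with pi^*a = (a,0), E = (0,1),
  pi^*a . pi^*b = a.b, pi^*a . E = 0, E . E = -1.\<close>
definition blowup_form :: "('a \<Rightarrow> 'a \<Rightarrow> int) \<Rightarrow> ('a \<times> int) \<Rightarrow> ('a \<times> int) \<Rightarrow> int" where
  "blowup_form B u v = B (fst u) (fst v) - snd u * snd v"

definition blowup_SW :: "('a \<Rightarrow> int) \<Rightarrow> ('a \<times> int) \<Rightarrow> int" where
  "blowup_SW SW u = (if snd u = 0 \<or> snd u = 1 then SW (fst u) else 0)"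

end

theory Submission
  imports Defs
begin


lemma eps_cube: "eps ^ 3 = 1"
proof -
  have "eps ^ 3 = exp (of_nat 3 * (2 * pi * \<i> / 3))"
    unfolding eps_def by (rule exp_of_nat_mult[symmetric])
  also have "of_nat 3 * (2 * pi * \<i> / 3) = 2 * pi * \<i>" by simp
  finally show ?thesis by simp
qed

lemma eps_nz: "eps \<noteq> 0" unfolding eps_def by simp

lemma eps_ne1: "eps \<noteq> 1"
proof
  assume "eps = 1"
  then have "\<exists>n::int. 3 * real_of_int n = 1"
    unfolding eps_def exp_eq_1 by auto
  then obtain k::int where "3 * real_of_int k = 1" by blast
  hence "3 * k = (1::int)" by linarith
  thus False by presburger
qed

lemma eps_sum: "1 + eps + eps^2 = 0"
proof -
  have "(eps - 1) * (1 + eps + eps^2) = eps^3 - 1" by (simp add: algebra_simps power2_eq_square power3_eq_cube)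
  also have "\<dots> = 0" by (simp add: eps_cube)
  finally show ?thesis using eps_ne1 by simp
qed

lemma eps_powi_mod: "eps powi j = eps ^ nat (j mod 3)"
proof -
  have j: "j = 3 * (j div 3) + j mod 3" by simp
  have "eps powi j = eps powi (3 * (j div 3)) * eps powi (j mod 3)"
    by (subst j, rule power_int_add) (simp add: eps_nz)
  also have "eps powi (3 * (j div 3)) = 1"
    by (simp add: power_int_mult eps_cube)
  also have "eps powi (j mod 3) = eps ^ nat (j mod 3)"
    by (metis int_nat_eq nat_int pos_mod_sign power_int_of_nat zero_less_numeral)
  finally show ?thesis by simp
qed

lemma eps_char: "1 + eps powi (j - r) + eps powi (r - j) = (if j mod 3 = r mod 3 then 3 else 0)"
proof -
  have a: "(j - r) mod 3 \<in> {0,1,2}" by auto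
  have b: "(r - j) mod 3 = (if (j - r) mod 3 = 0 then 0 else 3 - (j - r) mod 3)"
    by (smt (verit) mod_minus_eq mod_pos_pos_trivial pos_mod_bound pos_mod_sign minus_diff_eq zmod_zminus1_eq_if)
  have c: "(j mod 3 = r mod 3) = ((j - r) mod 3 = 0)" by (simp add: mod_eq_dvd_iff dvd_eq_mod_eq_0)
  show ?thesis using a unfolding eps_powi_mod b c
    using eps_sum by (auto simp: power2_eq_square eps_cube algebra_simps)
qed



lemma geo_int_summable:
  fixes c :: real assumes "0 \<le> c" "c < 1"
  shows "(\<lambda>m::int. c ^ nat \<bar>m\<bar>) summable_on UNIV"
proof -
  have sn: "(\<lambda>n::nat. c ^ n) summable_on UNIV"
    using assms by (intro norm_summable_imp_summable_on) (simp add: summable_geometric)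
  have "(\<lambda>m::int. c ^ nat \<bar>m\<bar>) summable_on (int ` UNIV)"
    by (subst summable_on_reindex) (simp_all add: o_def sn)
  moreover have "(\<lambda>m::int. c ^ nat \<bar>m\<bar>) summable_on ((\<lambda>n. - int n) ` UNIV)"
  proof (subst summable_on_reindex)
    show "inj_on (\<lambda>n. - int n) UNIV" by (simp add: inj_on_def)
    show "((\<lambda>m::int. c ^ nat \<bar>m\<bar>) \<circ> (\<lambda>n. - int n)) summable_on UNIV" using sn by (simp add: o_def)
  qed
  ultimately have "(\<lambda>m::int. c ^ nat \<bar>m\<bar>) summable_on (int ` UNIV \<union> (\<lambda>n. - int n) ` UNIV)"
    by (rule summable_on_union)
  also have "int ` UNIV \<union> (\<lambda>n. - int n) ` UNIV = UNIV"
  proof -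
    have "m \<in> int ` UNIV \<union> (\<lambda>n. - int n) ` UNIV" for m :: int
    proof (cases "0 \<le> m")
      case True then show ?thesis by (intro UnI1 image_eqI[of _ _ "nat m"]) auto
    next
      case False then show ?thesis by (intro UnI2 image_eqI[of _ _ "nat (-m)"]) auto
    qed
    thus ?thesis by auto
  qed
  finally show ?thesis .
qed

lemma geo_int2_summable:
  fixes c :: real assumes "0 \<le> c" "c < 1"
  shows "(\<lambda>(m::int, n::int). c ^ nat \<bar>m\<bar> * c ^ nat \<bar>n\<bar>) summable_on UNIV"
proof -
  let ?h = "\<lambda>m::int. c ^ nat \<bar>m\<bar>"
  have h: "?h summable_on UNIV" by (rule geo_int_summable[OF assms])
  have "(\<lambda>p. ?h (fst p) * ?h (snd p)) summable_on Sigma UNIV (\<lambda>_. UNIV)"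
  proof (rule summable_on_SigmaI)
    fix m :: int
    show "((\<lambda>n. ?h (fst (m, n)) * ?h (snd (m, n))) has_sum (?h m * infsum ?h UNIV)) UNIV"
      using has_sum_cmult_right[OF has_sum_infsum[OF h], of "?h m"] by simp
  next
    show "(\<lambda>m. ?h m * infsum ?h UNIV) summable_on UNIV"
      using summable_on_cmult_left[OF h] by simp
  next
    fix m n :: int show "0 \<le> ?h (fst (m,n)) * ?h (snd (m,n))" using assms by simp
  qed
  thus ?thesis by (simp add: case_prod_unfold)
qed

definition Qf :: "int \<Rightarrow> int \<Rightarrow> int" where "Qf m n = m^2 + m*n + n^2"

definition tt :: "(int \<Rightarrow> int \<Rightarrow> complex) \<Rightarrow> complex \<Rightarrow> complex \<Rightarrow> int \<times> int \<Rightarrow> complex" where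
  "tt w x y = (\<lambda>(m,n). w m n * x ^ nat (2 * Qf m n) * y powi (m + n))"

definition gg :: "int \<times> int \<Rightarrow> real" where
  "gg = (\<lambda>(m,n). (1/2) ^ nat \<bar>m\<bar> * (1/2) ^ nat \<bar>n\<bar>)"

lemma gg_summable: "gg summable_on UNIV"
  unfolding gg_def by (rule geo_int2_summable) auto

lemma Qf_ge: "nat \<bar>m\<bar> + nat \<bar>n\<bar> \<le> nat (2 * Qf m n)"
proof -
  have sq: "\<bar>k\<bar> \<le> k^2" for k :: int
  proof (cases "k = 0")
    case False
    hence "\<bar>k\<bar> * 1 \<le> \<bar>k\<bar> * \<bar>k\<bar>" by (intro mult_left_mono) auto
    thus ?thesis by (simp add: power2_eq_square)
  qed simp
  have "\<bar>m\<bar> \<le> m^2" by (rule sq)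
  moreover have "\<bar>n\<bar> \<le> n^2" by (rule sq)
  moreover have "0 \<le> (m+n)^2" by simp
  ultimately have "\<bar>m\<bar> + \<bar>n\<bar> \<le> 2 * Qf m n" unfolding Qf_def by (simp add: power2_eq_square algebra_simps)
  thus ?thesis by linarith
qed

lemma Qf_nonneg: "0 \<le> Qf m n"
proof -
  have "0 \<le> m^2 + n^2 + (m+n)^2" by simp
  thus ?thesis unfolding Qf_def by (simp add: power2_eq_square algebra_simps)
qed

lemma norm_y_powi:
  fixes y :: complex assumes "y \<noteq> 0" "norm y \<le> s" "1 / norm y \<le> s"
  shows "norm (y powi j) \<le> s ^ nat \<bar>j\<bar>"
proof (cases "0 \<le> j")
  case True
  hence "norm (y powi j) = norm y ^ nat \<bar>j\<bar>" by (simp add: norm_power_int power_int_def norm_power)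
  also have "\<dots> \<le> s ^ nat \<bar>j\<bar>" using assms by (intro power_mono) auto
  finally show ?thesis .
next
  case False
  hence "norm (y powi j) = (1 / norm y) ^ nat \<bar>j\<bar>" by (simp add: norm_power_int power_int_def norm_power norm_inverse power_inverse divide_inverse)
  also have "\<dots> \<le> s ^ nat \<bar>j\<bar>" using assms by (intro power_mono) auto
  finally show ?thesis .
qed

lemma tt_bound:
  fixes y x :: complex
  assumes y: "y \<noteq> 0" "norm y \<le> s" "1 / norm y \<le> s" and s1: "1 \<le> s"
    and xs: "norm x * s \<le> 1/2" and w: "norm (w m n) \<le> 1"
  shows "norm (tt w x y (m,n)) \<le> (norm x * s) ^ (nat \<bar>m\<bar> + nat \<bar>n\<bar>)"
proof -
  let ?N = "nat \<bar>m\<bar> + nat \<bar>n\<bar>"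
  have "norm x * 1 \<le> norm x * s" by (rule mult_left_mono) (use s1 in auto)
  hence x1: "norm x \<le> 1" using xs by linarith
  have a: "norm x ^ nat (2 * Qf m n) \<le> norm x ^ ?N"
    using x1 Qf_ge by (intro power_decreasing) auto
  have b: "norm (y powi (m+n)) \<le> s ^ ?N"
  proof -
    have "norm (y powi (m+n)) \<le> s ^ nat \<bar>m+n\<bar>" by (rule norm_y_powi[OF y])
    also have "\<dots> \<le> s ^ ?N" using s1 by (intro power_increasing) auto
    finally show ?thesis .
  qed
  have "norm (tt w x y (m,n)) = norm (w m n) * norm x ^ nat (2 * Qf m n) * norm (y powi (m+n))"
    by (simp add: tt_def norm_mult norm_power)
  also have "\<dots> \<le> 1 * norm x ^ ?N * s ^ ?N"
    using w a b by (intro mult_mono) auto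
  also have "\<dots> = (norm x * s) ^ ?N" by (simp add: power_mult_distrib)
  finally show ?thesis .
qed

lemma tt_bound2:
  fixes y x :: complex
  assumes y: "y \<noteq> 0" "norm y \<le> s" "1 / norm y \<le> s" and s1: "1 \<le> s"
    and xs: "norm x * s \<le> 1/2" and w: "norm (w m n) \<le> 1"
  shows "norm (tt w x y (m,n)) \<le> gg (m,n)"
    and "(m,n) \<noteq> (0,0) \<Longrightarrow> norm (tt w x y (m,n)) \<le> 2 * (norm x * s) * gg (m,n)"
proof -
  let ?N = "nat \<bar>m\<bar> + nat \<bar>n\<bar>"
  have t: "norm (tt w x y (m,n)) \<le> (norm x * s) ^ ?N" by (rule tt_bound[where w=w and m=m and n=n, OF y s1 xs w])
  have g: "gg (m,n) = (1/2) ^ ?N" by (simp add: gg_def power_add)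
  show "norm (tt w x y (m,n)) \<le> gg (m,n)"
    using t xs unfolding g by (smt (verit) mult_nonneg_nonneg norm_ge_zero power_mono s1)
  assume "(m,n) \<noteq> (0,0)"
  hence "?N \<ge> 1" by auto
  define k where "k = ?N - 1"
  have k: "?N = Suc k" using \<open>?N \<ge> 1\<close> unfolding k_def by linarith
  have "(norm x * s) ^ ?N = (norm x * s) * (norm x * s) ^ k" by (simp add: k)
  also have "\<dots> \<le> (norm x * s) * (1/2) ^ k"
    using xs s1 by (intro mult_left_mono power_mono) auto
  also have "\<dots> = 2 * (norm x * s) * (1/2) ^ ?N" by (simp add: k)
  finally show "norm (tt w x y (m,n)) \<le> 2 * (norm x * s) * gg (m,n)" using t g by simp
qed

lemma tt_summable:
  fixes y x :: complex
  assumes y: "y \<noteq> 0" "norm y \<le> s" "1 / norm y \<le> s" and s1: "1 \<le> s"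
    and xs: "norm x * s \<le> 1/2" and w: "\<And>m n. norm (w m n) \<le> 1"
  shows "tt w x y summable_on UNIV"
proof -
  have "(\<lambda>p. norm (tt w x y p)) summable_on UNIV"
  proof (rule Infinite_Sum.abs_summable_on_comparison_test)
    show "(\<lambda>p. norm (gg p)) summable_on UNIV" using gg_summable
      by (simp add: gg_def case_prod_unfold)
    fix p :: "int \<times> int"
    obtain m n where p: "p = (m,n)" by fastforce
    show "norm (tt w x y p) \<le> norm (gg p)"
      using tt_bound2(1)[where w=w and m=m and n=n, OF assms(1-5) w[of m n]] by (simp add: p gg_def)
  qed
  thus ?thesis by (rule abs_summable_summable)
qed

lemma tt_near1:
  fixes y x :: complex
  assumes y: "y \<noteq> 0" "norm y \<le> s" "1 / norm y \<le> s" and s1: "1 \<le> s"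
    and xs: "norm x * s \<le> 1/2" and w: "\<And>m n. norm (w m n) \<le> 1" and w0: "w 0 0 = 1"
  shows "norm (infsum (tt w x y) UNIV - 1) \<le> 2 * (norm x * s) * infsum gg UNIV"
proof -
  define d :: "int \<times> int \<Rightarrow> complex" where "d = (\<lambda>p. if p = (0,0) then 1 else 0)"
  have dsum: "(d has_sum 1) UNIV"
    using has_sum_finiteI[of "{(0,0)}" 1 d] has_sum_cong_neutral[of UNIV "{(0::int,0::int)}" d d]
    by (auto simp: d_def)
  have ts: "(tt w x y has_sum infsum (tt w x y) UNIV) UNIV"
    using tt_summable[OF assms(1-6)] by simp
  have diff: "((\<lambda>p. tt w x y p + - d p) has_sum (infsum (tt w x y) UNIV + - 1)) UNIV"
    by (intro has_sum_add ts has_sum_uminus[THEN iffD2]) (simp add: dsum)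
  have gs: "((\<lambda>p. 2 * (norm x * s) * gg p) has_sum (2 * (norm x * s) * infsum gg UNIV)) UNIV"
    by (intro has_sum_cmult_right) (simp add: gg_summable)
  have "norm (infsum (tt w x y) UNIV + - 1) \<le> 2 * (norm x * s) * infsum gg UNIV"
  proof (rule norm_infsum_le[OF diff gs])
    fix p :: "int \<times> int"
    obtain m n where p: "p = (m,n)" by fastforce
    show "norm (tt w x y p + - d p) \<le> 2 * (norm x * s) * gg p"
    proof (cases "p = (0,0)")
      case True thus ?thesis using w0 xs s1 by (simp add: d_def tt_def Qf_def gg_def)
    next
      case False thus ?thesis using tt_bound2(2)[where w=w and m=m and n=n, OF assms(1-5) w[of m n]] by (auto simp: d_def p)
    qed
  qed
  thus ?thesis by simp
qed



definition e1 :: "int \<Rightarrow> int \<Rightarrow> complex" where "e1 = (\<lambda>m n. eps powi (m - n))"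
definition e2 :: "int \<Rightarrow> int \<Rightarrow> complex" where "e2 = (\<lambda>m n. eps powi (n - m))"
definition e0 :: "int \<Rightarrow> int \<Rightarrow> complex" where "e0 = (\<lambda>m n. 1)"

lemma norm_eps: "norm eps = 1" unfolding eps_def by (simp add: norm_exp_eq_Re)

lemma norm_eps_powi: "norm (eps powi j) = 1" by (simp add: norm_power_int norm_eps)

lemma theta00_tt: "theta_A2d_00 x y = infsum (tt e0 x y) UNIV"
  unfolding theta_A2d_00_def tt_def Qf_def e0_def by (simp add: case_prod_unfold)

lemma theta01_tt: "theta_A2d_01 x y = infsum (tt e1 x y) UNIV"
  unfolding theta_A2d_01_def tt_def Qf_def e1_def by (simp add: case_prod_unfold)

lemma theta01_swap: "infsum (tt e2 x y) UNIV = infsum (tt e1 x y) UNIV"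
proof (rule infsum_reindex_bij_witness[of UNIV "\<lambda>(m,n). (n,m)" "\<lambda>(m,n). (n,m)"])
  fix p :: "int \<times> int"
  obtain m n where p: "p = (m,n)" by fastforce
  show "tt e1 x y ((\<lambda>(m,n). (n,m)) p) = tt e2 x y p"
    by (simp add: p tt_def e1_def e2_def Qf_def algebra_simps)
qed auto

context
  fixes x y :: complex and s :: real
  assumes y: "y \<noteq> 0" "norm y \<le> s" "1 / norm y \<le> s" and s1: "1 \<le> s"
    and xs: "norm x * s \<le> 1/2"
begin

lemma sum_e0: "tt e0 x y summable_on UNIV"
  by (rule tt_summable[OF y s1 xs]) (simp add: e0_def)
lemma sum_e1: "tt e1 x y summable_on UNIV"
  by (rule tt_summable[OF y s1 xs]) (simp add: e1_def norm_eps_powi)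
lemma sum_e2: "tt e2 x y summable_on UNIV"
  by (rule tt_summable[OF y s1 xs]) (simp add: e2_def norm_eps_powi)

lemma char_sum:
  "infsum (tt e0 x y) UNIV + eps powi (- r) * infsum (tt e1 x y) UNIV + eps powi r * infsum (tt e2 x y) UNIV
   = 3 * infsum (tt e0 x y) {p. (fst p - snd p) mod 3 = r mod 3}"
proof -
  let ?P = "\<lambda>p::int\<times>int. (fst p - snd p) mod 3 = r mod 3"
  have pt: "tt e0 x y p + eps powi (- r) * tt e1 x y p + eps powi r * tt e2 x y p
       = (if ?P p then 3 * tt e0 x y p else 0)" for p
  proof -
    obtain m n where p: "p = (m,n)" by fastforce
    have a: "eps powi (- r) * eps powi (m - n) = eps powi (m - n - r)"
      by (simp add: power_int_add[symmetric] eps_nz)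
    have b: "eps powi r * eps powi (n - m) = eps powi (r - (m - n))"
    proof -
      have e: "r - (m - n) = r + (n - m)" by simp
      have "eps powi (r + (n - m)) = eps powi r * eps powi (n - m)" by (rule power_int_add) (simp add: eps_nz)
      thus ?thesis unfolding e by simp
    qed
    have "tt e0 x y p + eps powi (- r) * tt e1 x y p + eps powi r * tt e2 x y p
        = (1 + eps powi (- r) * eps powi (m - n) + eps powi r * eps powi (n - m)) * tt e0 x y p"
      by (simp add: p tt_def e0_def e1_def e2_def algebra_simps)
    also have "\<dots> = (if ?P p then 3 else 0) * tt e0 x y p"
      unfolding a b eps_char by (simp add: p)
    finally show ?thesis by simp
  qed
  have "infsum (tt e0 x y) UNIV + eps powi (- r) * infsum (tt e1 x y) UNIV + eps powi r * infsum (tt e2 x y) UNIV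
      = infsum (\<lambda>p. tt e0 x y p + eps powi (- r) * tt e1 x y p + eps powi r * tt e2 x y p) UNIV"
    using sum_e0 sum_e1 sum_e2
    by (simp add: infsum_add summable_on_add summable_on_cmult_right infsum_cmult_right)
  also have "\<dots> = infsum (\<lambda>p. if ?P p then 3 * tt e0 x y p else 0) UNIV"
    by (simp add: pt)
  also have "\<dots> = infsum (\<lambda>p. 3 * tt e0 x y p) {p. ?P p}"
    by (rule infsum_cong_neutral) auto
  also have "\<dots> = 3 * infsum (tt e0 x y) {p. ?P p}"
    by (rule infsum_cmult_right) (rule summable_on_subset[OF sum_e0], simp)
  finally show ?thesis .
qed

lemma bij0: "theta_A2_00 (x ^ 3) y = infsum (tt e0 x y) {p. (fst p - snd p) mod 3 = 0 mod 3}"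
  unfolding theta_A2_00_def
proof (rule infsum_reindex_bij_witness[where i="\<lambda>(m,n). ((2*m+n) div 3, (m+2*n) div 3)" and j="\<lambda>(p,q). (2*p-q, 2*q-p)"])
  fix a :: "int \<times> int" assume "a \<in> {p. (fst p - snd p) mod 3 = 0 mod 3}"
  then obtain m n where a: "a = (m,n)" and d: "(m - n) mod 3 = 0" by (cases a) auto
  then obtain t where t: "m = n + 3 * t" by (metis dvd_def mod_0_imp_dvd add.commute diff_add_cancel)
  have 1: "(2*m+n) div 3 = n + 2*t" unfolding t by simp
  have 2: "(m+2*n) div 3 = n + t" unfolding t by simp
  show "(\<lambda>(p,q). (2*p-q, 2*q-p)) ((\<lambda>(m,n). ((2*m+n) div 3, (m+2*n) div 3)) a) = a"
    by (simp add: a 1 2 t)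
  show "(\<lambda>(m,n). ((2*m+n) div 3, (m+2*n) div 3)) a \<in> UNIV" by simp
next
  fix b :: "int \<times> int"
  obtain p q where b: "b = (p,q)" by fastforce
  have 1: "(2*(2*p-q)+(2*q-p)) div 3 = p" by simp
  have 2: "((2*p-q)+2*(2*q-p)) div 3 = q" by simp
  show "(\<lambda>(m,n). ((2*m+n) div 3, (m+2*n) div 3)) ((\<lambda>(p,q). (2*p-q, 2*q-p)) b) = b"
    using 1 2 by (simp add: b)
  show "(\<lambda>(p,q). (2*p-q, 2*q-p)) b \<in> {p. (fst p - snd p) mod 3 = 0 mod 3}"
    by (simp add: b algebra_simps)
  have Q: "2 * Qf (2*p-q) (2*q-p) = 3 * (2 * (p^2 - p*q + q^2))"
    by (simp add: Qf_def power2_eq_square algebra_simps)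
  have N: "nat (3 * (2 * (p^2 - p*q + q^2))) = 3 * nat (2 * (p^2 - p*q + q^2))" by simp
  show "tt e0 x y ((\<lambda>(p,q). (2*p-q, 2*q-p)) b) =
    (\<lambda>(m, n). (x ^ 3) ^ nat (2 * (m\<^sup>2 - m * n + n\<^sup>2)) * y powi (m + n)) b"
  proof -
    have X: "x ^ nat (2 * Qf (2*p-q) (2*q-p)) = (x^3)^nat(2*(p^2-p*q+q^2))"
      unfolding Q N by (simp add: power_mult)
    show ?thesis using X by (simp add: b tt_def e0_def add.commute)
  qed
qed


lemma bij2: "theta_A2_10_cube x y = infsum (tt e0 x y) {p. (fst p - snd p) mod 3 = 2 mod 3}"
  unfolding theta_A2_10_cube_def
proof (rule infsum_reindex_bij_witness[where i="\<lambda>(m,n). ((2*m+n-1) div 3, (m+2*n+1) div 3)" and j="\<lambda>(p,q). (2*p-q+1, 2*q-p-1)"])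
  fix a :: "int \<times> int" assume "a \<in> {p. (fst p - snd p) mod 3 = 2 mod 3}"
  then obtain m n where a: "a = (m,n)" and d: "(m - n) mod 3 = 2" by (cases a) auto
  define t where "t = (m - n) div 3"
  have t: "m = n + 3 * t + 2" using d unfolding t_def by (metis add.commute diff_add_cancel div_mult_mod_eq mult.commute add.assoc)
  have 1: "(2*m+n-1) div 3 = n + 2*t + 1" unfolding t by simp
  have 2: "(m+2*n+1) div 3 = n + t + 1" unfolding t by simp
  show "(\<lambda>(p,q). (2*p-q+1, 2*q-p-1)) ((\<lambda>(m,n). ((2*m+n-1) div 3, (m+2*n+1) div 3)) a) = a"
    by (simp add: a 1 2) (simp add: t)
  show "(\<lambda>(m,n). ((2*m+n-1) div 3, (m+2*n+1) div 3)) a \<in> UNIV" by simp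
next
  fix b :: "int \<times> int"
  obtain p q where b: "b = (p,q)" by fastforce
  have 1: "(2*(2*p-q+1)+(2*q-p-1)-1) div 3 = p" by simp
  have 2: "((2*p-q+1)+2*(2*q-p-1)+1) div 3 = q" by simp
  show "(\<lambda>(m,n). ((2*m+n-1) div 3, (m+2*n+1) div 3)) ((\<lambda>(p,q). (2*p-q+1, 2*q-p-1)) b) = b"
    using 1 2 by (simp add: b)
  have "(2*p-q+1 - (2*q-p-1)) mod 3 = (3 * (p - q) + 2) mod 3" by (simp add: algebra_simps)
  also have "\<dots> = 2" by presburger
  finally show "(\<lambda>(p,q). (2*p-q+1, 2*q-p-1)) b \<in> {p. (fst p - snd p) mod 3 = 2 mod 3}"
    by (simp add: b)
  have Q: "2 * Qf (2*p-q+1) (2*q-p-1) = 6 * (p^2 - p*q + q^2 + p - q) + 2"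
    by (simp add: Qf_def power2_eq_square algebra_simps)
  show "tt e0 x y ((\<lambda>(p,q). (2*p-q+1, 2*q-p-1)) b) =
    (\<lambda>(m, n). x ^ nat (6 * (m\<^sup>2 - m * n + n\<^sup>2 + m - n) + 2) * y powi (m + n)) b"
  proof -
    have X: "x ^ nat (2 * Qf (2*p-q+1) (2*q-p-1)) = x ^ nat (6 * (p^2 - p*q + q^2 + p - q) + 2)"
      unfolding Q ..
    have Y: "(2*p-q+1) + (2*q-p-1) = p + q" by simp
    show ?thesis using X by (simp add: b tt_def e0_def Y)
  qed
qed

end

lemma rot10: "theta_A2_10_cube (eps ^ k * x) y = eps ^ (2 * k) * theta_A2_10_cube x y"
proof -
  have pt: "(eps ^ k * x) ^ nat (6 * (p^2 - p*q + q^2 + p - q) + 2) = eps ^ (2*k) * x ^ nat (6 * (p^2 - p*q + q^2 + p - q) + 2)" for p q :: int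
  proof -
    define N where "N = nat (6 * (p^2 - p*q + q^2 + p - q) + 2)"
    have Q: "2 * Qf (2*p-q+1) (2*q-p-1) = 6 * (p^2 - p*q + q^2 + p - q) + 2"
      by (simp add: Qf_def power2_eq_square algebra_simps)
    have nn: "0 \<le> 6 * (p^2 - p*q + q^2 + p - q) + 2" using Qf_nonneg[of "2*p-q+1" "2*q-p-1"] Q by linarith
    hence iN: "int N = 6 * (p^2 - p*q + q^2 + p - q) + 2" unfolding N_def by simp
    have "eps ^ N = eps powi (int N)" by simp
    also have "\<dots> = eps ^ nat (int N mod 3)" by (rule eps_powi_mod)
    also have "int N mod 3 = 2" unfolding iN by presburger
    finally have eN: "eps ^ N = eps ^ 2" by simp
    have "(eps ^ k * x) ^ N = (eps ^ N) ^ k * x ^ N" by (simp add: power_mult_distrib power_mult[symmetric] mult.commute)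
    also have "\<dots> = eps ^ (2*k) * x ^ N" by (simp add: eN power_mult[symmetric])
    finally show ?thesis unfolding N_def .
  qed
  have F: "(\<lambda>(p::int,q::int). (eps ^ k * x) ^ nat (6 * (p^2 - p*q + q^2 + p - q) + 2) * y powi (p + q))
     = (\<lambda>b. eps ^ (2*k) * (\<lambda>(p::int,q::int). x ^ nat (6 * (p^2 - p*q + q^2 + p - q) + 2) * y powi (p + q)) b)"
    by (rule ext) (clarsimp simp only: split_paired_all case_prod_conv pt mult.assoc)
  show ?thesis unfolding theta_A2_10_cube_def F by (rule infsum_cmult_right')
qed

lemma rot00: "theta_A2_00 ((eps ^ k * x) ^ 3) y = theta_A2_00 (x ^ 3) y"
proof -
  have "(eps ^ k * x) ^ 3 = (eps ^ 3) ^ k * x ^ 3" by (simp add: power_mult_distrib power_mult[symmetric] mult.commute)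
  thus ?thesis by (simp add: eps_cube)
qed

lemma rot_eta: "etabar ((eps ^ k * x) ^ 6) = etabar (x ^ 6)"
proof -
  have "(eps ^ k * x) ^ 6 = ((eps ^ 3) ^ 2) ^ k * x ^ 6" by (simp add: power_mult_distrib power_mult[symmetric] mult.commute)
  thus ?thesis by (simp add: eps_cube)
qed



definition Fab :: "('a::ab_group_add \<Rightarrow> 'a \<Rightarrow> int) \<Rightarrow> 'a \<Rightarrow> ('a \<Rightarrow> int) \<Rightarrow> complex \<Rightarrow> complex \<Rightarrow> 'a \<Rightarrow> 'a \<Rightarrow> 'a \<Rightarrow> complex" where
  "Fab B K SW p q c a b = of_int (SW a * SW b) * eps powi (B (a - b) c) * p powi (B a b) * q powi (B (K - a) (K - b))"

lemma bterm:
  fixes B :: "'a::ab_group_add \<Rightarrow> 'a \<Rightarrow> int" and p q :: complex and l :: nat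
  assumes p: "p \<noteq> 0" and q: "q \<noteq> 0" and i: "i \<in> {0,1::int}" and j: "j \<in> {0,1::int}"
  shows "of_int (blowup_SW SW (a,i) * blowup_SW SW (b,j)) * eps powi (blowup_form B ((a,i) - (b,j)) (c1, - int l))
       * p powi (blowup_form B (a,i) (b,j)) * q powi (blowup_form B ((K,1) - (a,i)) ((K,1) - (b,j)))
     = Fab B K SW p q c1 a b * (if i = 0 \<and> j = 0 then inverse q else if i = 1 \<and> j = 1 then inverse p
          else if i = 1 then eps powi int l else eps powi (- int l))"
proof -
  have bs: "blowup_SW SW (a,i) = SW a" "blowup_SW SW (b,j) = SW b" using i j by (auto simp: blowup_SW_def)
  have e1: "eps powi (B (a - b) c1 + int l) = eps powi (B (a - b) c1) * eps powi int l"
    by (rule power_int_add) (simp add: eps_nz)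
  have e2: "eps powi (B (a - b) c1 - int l) = eps powi (B (a - b) c1) * eps powi (- int l)"
    using power_int_add[of eps "B (a - b) c1" "- int l"] eps_nz by simp
  have p1: "p powi (B a b - 1) = p powi (B a b) * inverse p"
    using power_int_add[of p "B a b" "- 1"] p by (simp add: power_int_minus)
  have q1: "q powi (B (K - a) (K - b) - 1) = q powi (B (K - a) (K - b)) * inverse q"
    using power_int_add[of q "B (K - a) (K - b)" "- 1"] q by (simp add: power_int_minus)
  have d1: "blowup_form B ((a,i) - (b,j)) (c1, - int l) = B (a - b) c1 + (i - j) * int l"
    by (simp add: blowup_form_def)
  have d2: "blowup_form B (a,i) (b,j) = B a b - i * j" by (simp add: blowup_form_def)
  have d3: "blowup_form B ((K,1) - (a,i)) ((K,1) - (b,j)) = B (K - a) (K - b) - (1 - i) * (1 - j)"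
    by (simp add: blowup_form_def)
  show ?thesis unfolding d1 d2 d3 bs
  proof -
    consider "i = 0" "j = 0" | "i = 0" "j = 1" | "i = 1" "j = 0" | "i = 1" "j = 1" using i j by auto
    thus "of_int (SW a * SW b) * eps powi (B (a - b) c1 + (i - j) * int l) * p powi (B a b - i * j) *
      q powi (B (K - a) (K - b) - (1 - i) * (1 - j)) =
      Fab B K SW p q c1 a b * (if i = 0 \<and> j = 0 then inverse q else if i = 1 \<and> j = 1 then inverse p
          else if i = 1 then eps powi int l else eps powi (- int l))"
    proof cases
      case 1 thus ?thesis by (simp add: q1 Fab_def mult_ac)
    next
      case 2 thus ?thesis by (simp add: e2 Fab_def mult_ac)
    next
      case 3 thus ?thesis by (simp add: e1 Fab_def mult_ac)
    next
      case 4 thus ?thesis by (simp add: p1 Fab_def mult_ac)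
    qed
  qed
qed

lemma psi_blowup:
  fixes B :: "'a::ab_group_add \<Rightarrow> 'a \<Rightarrow> int" and l :: nat
  assumes fin: "finite {a. SW a \<noteq> 0}"
    and X: "theta_A2d_01 z y / (3 * etabar (z ^ 6) ^ 3) \<noteq> 0"
    and zp: "Zp z y \<noteq> 0" and zm: "Zm z y \<noteq> 0"
  shows "psi (blowup_form B) (K,1) chi (blowup_SW SW) Zp Zm (c1, - int l) z y
    = psi B K chi SW Zp Zm c1 z y * (theta_A2d_01 z y / (3 * etabar (z ^ 6) ^ 3))
      * (inverse (Zp z y) + inverse (Zm z y) + eps powi int l + eps powi (- int l))"
proof -
  define A where "A = {a. SW a \<noteq> 0}"
  define I where "I = {0, 1::int}"
  define Xv where "Xv = theta_A2d_01 z y / (3 * etabar (z ^ 6) ^ 3)"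
  define Sf where "Sf = inverse (Zp z y) + inverse (Zm z y) + eps powi int l + eps powi (- int l)"
  have set: "{u. blowup_SW SW u \<noteq> 0} = A \<times> I"
    by (auto simp: blowup_SW_def A_def I_def split: if_splits)
  define T where "T = (\<lambda>u v. of_int (blowup_SW SW u * blowup_SW SW v) * eps powi (blowup_form B (u - v) (c1, - int l))
       * Zp z y powi (blowup_form B u v) * Zm z y powi (blowup_form B ((K,1) - u) ((K,1) - v)))"
  have inner: "(\<Sum>i\<in>I. \<Sum>j\<in>I. T (a,i) (b,j)) = Fab B K SW (Zp z y) (Zm z y) c1 a b * Sf" for a b
  proof -
    have "(\<Sum>i\<in>I. \<Sum>j\<in>I. T (a,i) (b,j)) = (\<Sum>i\<in>I. \<Sum>j\<in>I. Fab B K SW (Zp z y) (Zm z y) c1 a b *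
        (if i = 0 \<and> j = 0 then inverse (Zm z y) else if i = 1 \<and> j = 1 then inverse (Zp z y)
          else if i = 1 then eps powi int l else eps powi (- int l)))"
      unfolding T_def by (intro sum.cong refl bterm[OF zp zm]) (auto simp: I_def)
    also have "\<dots> = Fab B K SW (Zp z y) (Zm z y) c1 a b * Sf"
      by (simp add: I_def Sf_def algebra_simps)
    finally show ?thesis .
  qed
  have "(\<Sum>u\<in>A \<times> I. \<Sum>v\<in>A \<times> I. T u v) = (\<Sum>a\<in>A. \<Sum>i\<in>I. \<Sum>b\<in>A. \<Sum>j\<in>I. T (a,i) (b,j))"
    by (simp add: sum.cartesian_product')
  also have "\<dots> = (\<Sum>a\<in>A. \<Sum>b\<in>A. \<Sum>i\<in>I. \<Sum>j\<in>I. T (a,i) (b,j))"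
    by (rule sum.cong[OF refl], rule sum.swap)
  also have "\<dots> = (\<Sum>a\<in>A. \<Sum>b\<in>A. Fab B K SW (Zp z y) (Zm z y) c1 a b * Sf)"
    by (simp add: inner)
  finally have S: "(\<Sum>u\<in>A \<times> I. \<Sum>v\<in>A \<times> I. T u v) = (\<Sum>a\<in>A. \<Sum>b\<in>A. Fab B K SW (Zp z y) (Zm z y) c1 a b) * Sf"
    by (simp add: sum_distrib_right)
  have KK: "- blowup_form B (K,1) (K,1) = - B K K + 1" by (simp add: blowup_form_def)
  have Xp: "Xv powi (- blowup_form B (K,1) (K,1)) = Xv powi (- B K K) * Xv"
    unfolding KK using power_int_add[of Xv "- B K K" 1] X by (simp add: Xv_def)
  show ?thesis
    unfolding psi_def set Xp[unfolded Xv_def] S[unfolded T_def Sf_def]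
    by (simp add: Fab_def A_def mult_ac)
qed



lemma etabar_nz:
  fixes w :: complex assumes "norm w < 1" shows "etabar w \<noteq> 0"
proof -
  have sg: "summable (\<lambda>i. norm w ^ i)" using assms by (simp add: summable_geometric)
  have "summable (\<lambda>i. norm ((1 - w ^ (i + 1)) - 1))"
    using summable_mult[OF sg, of "norm w"] by (simp add: norm_power norm_mult norm_minus_commute)
  hence "abs_convergent_prod (\<lambda>i. 1 - w ^ (i + 1))" by (rule summable_imp_abs_convergent_prod)
  hence cp: "convergent_prod (\<lambda>i. 1 - w ^ (i + 1))" by (rule abs_convergent_prod_imp_convergent_prod)
  have nz: "1 - w ^ (i + 1) \<noteq> 0" for i
  proof
    assume "1 - w ^ (i + 1) = 0"
    hence "norm (w ^ (i+1)) = 1" by (metis eq_iff_diff_eq_0 norm_one)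
    moreover have "norm (w ^ (i+1)) < 1" unfolding norm_power using assms
      by (subst power_less_one_iff) auto
    ultimately show False by simp
  qed
  show ?thesis unfolding etabar_def by (rule prodinf_nonzero[OF cp nz])
qed

lemma prod_near1:
  fixes a d :: complex
  assumes "norm (a - 1) \<le> 1/10" "norm (d - 1) \<le> 1/10"
  shows "norm (a * d - 1) \<le> 21/100"
proof -
  have eq: "a * d - 1 = (a - 1) * (d - 1) + (a - 1) + (d - 1)" by (simp add: algebra_simps)
  have "norm (a * d - 1) \<le> norm ((a - 1) * (d - 1)) + norm (a - 1) + norm (d - 1)"
    using norm_triangle_ineq[of "(a - 1) * (d - 1) + (a - 1)" "d - 1"] norm_triangle_ineq[of "(a - 1) * (d - 1)" "a - 1"]
    unfolding eq by linarith
  also have "norm ((a - 1) * (d - 1)) \<le> 1/10 * (1/10)"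
    unfolding norm_mult using assms by (intro mult_mono) auto
  finally show ?thesis using assms by simp
qed

lemma Zsum_nz:
  fixes a b c d :: complex
  assumes "norm (a - 1) \<le> 1/10" "norm (b - 1) \<le> 1/10" "norm (c - 1) \<le> 1/10" "norm (d - 1) \<le> 1/10"
  shows "a / b + 3 * (c / d) \<noteq> 0" and "b \<noteq> 0"
proof -
  have nz: "z \<noteq> 0" if "norm (z - 1) \<le> 1/10" for z :: complex
  proof
    assume "z = 0" with that show False by simp
  qed
  have b: "b \<noteq> 0" and d: "d \<noteq> 0" using nz assms by auto
  show "b \<noteq> 0" by (rule b)
  have 1: "norm (a * d - 1) \<le> 21/100" by (rule prod_near1) (use assms in auto)
  have 2: "norm (c * b - 1) \<le> 21/100" by (rule prod_near1) (use assms in auto)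
  have "a * d + 3 * (c * b) - 4 = (a * d - 1) + 3 * (c * b - 1)" by (simp add: algebra_simps)
  hence "norm (a * d + 3 * (c * b) - 4) \<le> norm (a * d - 1) + norm (3 * (c * b - 1))"
    using norm_triangle_ineq[of "a * d - 1" "3 * (c * b - 1)"] by simp
  also have "norm (3 * (c * b - 1)) = 3 * norm (c * b - 1)" by (simp only: norm_mult) simp
  finally have "norm (a * d + 3 * (c * b) - 4) < 4" using 1 2 by linarith
  hence num: "a * d + 3 * (c * b) \<noteq> 0" by (intro notI) simp
  have "a / b + 3 * (c / d) = (a * d + 3 * (c * b)) / (b * d)" using b d by (simp add: field_simps)
  thus "a / b + 3 * (c / d) \<noteq> 0" using num b d by simp
qed

lemma eps_powi_cong: "j1 mod 3 = j2 mod 3 \<Longrightarrow> eps powi j1 = eps powi j2"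
  by (simp add: eps_powi_mod)



lemma Sf_val0: "eps powi int 0 + eps powi (- int 0) = 2" by simp

lemma Sf_val12: assumes "l = 1 \<or> l = (2::nat)" shows "eps powi int l + eps powi (- int l) = -1"
proof -
  have "eps + eps ^ 2 = -1" using eps_sum by (simp add: algebra_simps eq_neg_iff_add_eq_0)
  moreover have "eps powi (- 1) = eps ^ 2" using eps_powi_mod[of "- 1"] by simp
  moreover have "eps powi (- 2) = eps" using eps_powi_mod[of "- 2"] by simp
  ultimately show ?thesis using assms by (auto simp: add.commute)
qed

lemma expo12: assumes "l = 1 \<or> l = (2::nat)"
  shows "eps powi (int k * (2 * (b - int l * int l) + 8 * c)) * eps ^ (2 * k) = eps powi (int k * (2 * b + 8 * c))"
proof -
  have "eps powi (int k * (2 * (b - int l * int l) + 8 * c)) * eps ^ (2 * k)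
      = eps powi (int k * (2 * (b - int l * int l) + 8 * c)) * eps powi (int (2 * k))" by (simp only: power_int_of_nat)
  also have "\<dots> = eps powi (int k * (2 * (b - int l * int l) + 8 * c) + int (2 * k))"
    by (rule power_int_add[symmetric]) (simp add: eps_nz)
  also have "\<dots> = eps powi (int k * (2 * b + 8 * c))"
  proof (rule eps_powi_cong)
    have "int k * (2 * (b - int l * int l) + 8 * c) + int (2 * k) = int k * (2 * b + 8 * c) + 2 * int k * (1 - int l * int l)"
      by (simp add: algebra_simps)
    moreover have "(2 * int k * (1 - int l * int l)) mod 3 = 0" using assms by auto
    ultimately show "(int k * (2 * (b - int l * int l) + 8 * c) + int (2 * k)) mod 3 = (int k * (2 * b + 8 * c)) mod 3"
      by (simp add: mod_add_right_eq[symmetric])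
  qed
  finally show ?thesis .
qed

lemma norm_epsk: "norm (eps ^ k * x) = norm x" by (simp add: norm_mult norm_power norm_eps)

theorem mainTheorem7:
  fixes B :: "'a::ab_group_add \<Rightarrow> 'a \<Rightarrow> int"
    and K c1 :: 'a and chi :: int and SW :: "'a \<Rightarrow> int" and l :: nat
    and Zp Zm :: "complex \<Rightarrow> complex \<Rightarrow> complex"
  assumes "intersection_form B"
    and "finite {a. SW a \<noteq> 0}"
    and "l \<le> 2"
    and "roots_Zpm Zp Zm"
  shows "\<forall>y::complex. y \<noteq> 0 \<longrightarrow> (\<exists>r>0. \<forall>x::complex. norm x < r \<longrightarrow>
     Zinst (blowup_form B) (K, 1) chi (blowup_SW SW) Zp Zm (c1, - int l) x y =
       (if l = 0 then theta_A2_00 (x ^ 3) y / (etabar (x ^ 6)) ^ 3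
        else theta_A2_10_cube x y / (etabar (x ^ 6)) ^ 3)
       * Zinst B K chi SW Zp Zm c1 x y)"
proof (intro allI impI)
  note fin = assms(2) and l2 = assms(3) and roots = assms(4)
  fix y :: complex assume y0: "y \<noteq> 0"
  define s where "s = max 1 (max (norm y) (1 / norm y))"
  have s1: "1 \<le> s" and sy: "norm y \<le> s" and sy': "1 / norm y \<le> s" by (auto simp: s_def)
  have one0: "(1::complex) \<noteq> 0" and s1a: "norm (1::complex) \<le> s" and s1b: "1 / norm (1::complex) \<le> s"
    using s1 by auto
  define C where "C = infsum gg UNIV"
  have C0: "0 \<le> C" unfolding C_def by (rule infsum_nonneg) (auto simp: gg_def case_prod_unfold)
  define r where "r = 1 / (20 * s * (C + 1))"
  have r0: "r > 0" using s1 C0 by (simp add: r_def)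
  define G where "G x = (if l = 0 then theta_A2_00 (x ^ 3) y / (etabar (x ^ 6)) ^ 3
        else theta_A2_10_cube x y / (etabar (x ^ 6)) ^ 3)" for x :: complex
  have "\<exists>r>0. \<forall>x::complex. norm x < r \<longrightarrow>
     Zinst (blowup_form B) (K, 1) chi (blowup_SW SW) Zp Zm (c1, - int l) x y = G x * Zinst B K chi SW Zp Zm c1 x y"
  proof (intro exI[of _ r] conjI allI impI r0)
    fix x :: complex assume xr: "norm x < r"
    have "0 < s * 20 + C * (s * 20)" using s1 C0 by (simp add: add_pos_nonneg)
    hence rs: "r * s = 1 / (20 * (C + 1))" using s1 C0 by (simp add: r_def field_simps)
    have xs: "norm x * s \<le> 1 / (20 * (C + 1))"
      using mult_strict_right_mono[OF xr, of s] s1 rs by simp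
    have "1 / (20 * (C + 1)) \<le> 1/20" using C0 by (simp add: field_simps)
    hence zs: "norm x * s \<le> 1/2" using xs by linarith
    have "2 * (norm x * s) * C \<le> 2 * (1 / (20 * (C + 1))) * C"
      using xs C0 by (intro mult_right_mono) auto
    also have "\<dots> \<le> 1/10" using C0 by (simp add: field_simps)
    finally have zC: "2 * (norm x * s) * C \<le> 1/10" .
    have "norm x * 1 \<le> norm x * s" using s1 by (intro mult_left_mono) auto
    hence x1: "norm x < 1" using zs by linarith
    have key: "eps powi (int k * (2 * blowup_form B (c1, - int l) (c1, - int l) + 8 * chi))
        * psi (blowup_form B) (K,1) chi (blowup_SW SW) Zp Zm (c1, - int l) (eps ^ k * x) y
      = G x * (eps powi (int k * (2 * B c1 c1 + 8 * chi)) * psi B K chi SW Zp Zm c1 (eps ^ k * x) y)" for k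
    proof -
      define z where "z = eps ^ k * x"
      have nz: "norm z = norm x" unfolding z_def by (rule norm_epsk)
      have zs': "norm z * s \<le> 1/2" using zs nz by simp
      have near: "norm (infsum (tt w z y') UNIV - 1) \<le> 1/10"
        if "y' \<noteq> 0" "norm y' \<le> s" "1 / norm y' \<le> s" "\<And>m n. norm (w m n) \<le> 1" "w 0 0 = 1" for w y'
        using tt_near1[where w=w, OF that(1-3) s1 zs' that(4,5)] zC unfolding C_def nz by linarith
      have w0: "\<And>m n. norm (e0 m n) \<le> 1" "e0 0 0 = 1" by (auto simp: e0_def)
      have w1: "\<And>m n. norm (e1 m n) \<le> 1" "e1 0 0 = 1" by (auto simp: e1_def norm_eps_powi)
      have n00: "norm (theta_A2d_00 z y - 1) \<le> 1/10" unfolding theta00_tt by (rule near[where w=e0, OF y0 sy sy' w0])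
      have n01: "norm (theta_A2d_01 z y - 1) \<le> 1/10" unfolding theta01_tt by (rule near[where w=e1, OF y0 sy sy' w1])
      have n00': "norm (theta_A2d_00 z 1 - 1) \<le> 1/10" unfolding theta00_tt by (rule near[where w=e0, OF one0 s1a s1b w0])
      have n01': "norm (theta_A2d_01 z 1 - 1) \<le> 1/10" unfolding theta01_tt by (rule near[where w=e1, OF one0 s1a s1b w1])
      have Zs: "Zfun z y + 3 * Zfun z 1 \<noteq> 0" and t01: "theta_A2d_01 z y \<noteq> 0"
        unfolding Zfun_def using Zsum_nz[OF n00 n01 n00' n01'] by auto
      have "norm (z ^ 6) < 1" using x1 nz by (simp add: norm_power power_less_one_iff)
      hence eta: "etabar (z ^ 6) \<noteq> 0" by (rule etabar_nz)
      have X: "theta_A2d_01 z y / (3 * etabar (z ^ 6) ^ 3) \<noteq> 0" using t01 eta by simp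
      have rt: "Zp z y + Zm z y = (Zfun z y)^2 + 3 * Zfun z y * Zfun z 1"
               "Zp z y * Zm z y = Zfun z y + 3 * Zfun z 1"
        using roots unfolding roots_Zpm_def by auto
      have zp: "Zp z y \<noteq> 0" and zm: "Zm z y \<noteq> 0" using rt(2) Zs by auto
      have inv: "inverse (Zp z y) + inverse (Zm z y) = Zfun z y"
      proof -
        have "inverse (Zp z y) + inverse (Zm z y) = (Zp z y + Zm z y) / (Zp z y * Zm z y)"
          using zp zm by (simp add: field_simps)
        also have "\<dots> = Zfun z y * (Zfun z y + 3 * Zfun z 1) / (Zfun z y + 3 * Zfun z 1)"
          unfolding rt by (simp add: power2_eq_square algebra_simps)
        also have "\<dots> = Zfun z y" using Zs by simp
        finally show ?thesis .
      qed
      define cl where "cl = eps powi int l + eps powi (- int l)"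
      have pb: "psi (blowup_form B) (K,1) chi (blowup_SW SW) Zp Zm (c1, - int l) z y
          = psi B K chi SW Zp Zm c1 z y * ((theta_A2d_00 z y + cl * theta_A2d_01 z y) / (3 * etabar (x ^ 6) ^ 3))"
      proof -
        have "psi (blowup_form B) (K,1) chi (blowup_SW SW) Zp Zm (c1, - int l) z y
          = psi B K chi SW Zp Zm c1 z y * (theta_A2d_01 z y / (3 * etabar (z ^ 6) ^ 3)) * (Zfun z y + cl)"
        proof -
          have "psi (blowup_form B) (K,1) chi (blowup_SW SW) Zp Zm (c1, - int l) z y
            = psi B K chi SW Zp Zm c1 z y * (theta_A2d_01 z y / (3 * etabar (z ^ 6) ^ 3))
              * (inverse (Zp z y) + inverse (Zm z y) + eps powi int l + eps powi (- int l))"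
            by (rule psi_blowup[OF fin]) (use X zp zm in auto)
          thus ?thesis using inv by (simp add: cl_def add.assoc)
        qed
        moreover have "(theta_A2d_01 z y / (3 * etabar (z ^ 6) ^ 3)) * (Zfun z y + cl)
            = (theta_A2d_00 z y + cl * theta_A2d_01 z y) / (3 * etabar (x ^ 6) ^ 3)"
        proof -
          have ez: "etabar (z ^ 6) = etabar (x ^ 6)" unfolding z_def by (rule rot_eta)
          show ?thesis using t01 eta unfolding Zfun_def ez by (simp add: field_simps)
        qed
        ultimately show ?thesis by (simp only: mult.assoc)
      qed
      have sums: "theta_A2d_00 z y + eps powi (- r) * theta_A2d_01 z y + eps powi r * theta_A2d_01 z y
          = 3 * infsum (tt e0 z y) {p. (fst p - snd p) mod 3 = r mod 3}" for r
        using char_sum[OF y0 sy sy' s1 zs', of r] theta01_swap[of z y]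
        unfolding theta00_tt theta01_tt by simp
      show ?thesis
      proof (cases "l = 0")
        case True
        have "theta_A2d_00 z y + cl * theta_A2d_01 z y = 3 * theta_A2_00 (x ^ 3) y"
          using sums[of 0] bij0[OF y0 sy sy' s1 zs'] rot00[of k x y] True
          by (simp add: cl_def z_def algebra_simps)
        thus ?thesis using True pb by (simp add: G_def z_def blowup_form_def mult_ac)
      next
        case False
        hence l12: "l = 1 \<or> l = 2" using l2 by auto
        have e2: "eps powi (- 2) + eps powi 2 = -1"
          using Sf_val12[of 2] by (simp add: add.commute)
        have "theta_A2d_00 z y + cl * theta_A2d_01 z y = 3 * (eps ^ (2 * k) * theta_A2_10_cube x y)"
        proof -
          have cl1: "cl = -1" unfolding cl_def by (rule Sf_val12[OF l12])
          have "theta_A2d_00 z y + cl * theta_A2d_01 z y = theta_A2d_00 z y + (eps powi (- 2) + eps powi 2) * theta_A2d_01 z y"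
            unfolding cl1 e2 ..
          also have "\<dots> = theta_A2d_00 z y + eps powi (- 2) * theta_A2d_01 z y + eps powi 2 * theta_A2d_01 z y"
            by (simp only: distrib_right add.assoc)
          also have "\<dots> = 3 * theta_A2_10_cube z y"
            using sums[of 2] bij2[OF y0 sy sy' s1 zs'] by simp
          finally show ?thesis unfolding z_def rot10 .
        qed
        hence "psi (blowup_form B) (K,1) chi (blowup_SW SW) Zp Zm (c1, - int l) z y
            = psi B K chi SW Zp Zm c1 z y * eps ^ (2 * k) * (theta_A2_10_cube x y / etabar (x ^ 6) ^ 3)"
          using pb by simp
        moreover have "blowup_form B (c1, - int l) (c1, - int l) = B c1 c1 - int l * int l"
          by (simp add: blowup_form_def)
        ultimately show ?thesis using False expo12[OF l12, of k "B c1 c1" chi]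
          by (simp add: G_def z_def mult_ac)
      qed
    qed
    show "Zinst (blowup_form B) (K, 1) chi (blowup_SW SW) Zp Zm (c1, - int l) x y = G x * Zinst B K chi SW Zp Zm c1 x y"
    proof -
      have S: "(\<Sum>k<(3::nat). eps powi (int k * (2 * blowup_form B (c1, - int l) (c1, - int l) + 8 * chi))
          * psi (blowup_form B) (K,1) chi (blowup_SW SW) Zp Zm (c1, - int l) (eps ^ k * x) y)
        = (\<Sum>k<(3::nat). G x * (eps powi (int k * (2 * B c1 c1 + 8 * chi)) * psi B K chi SW Zp Zm c1 (eps ^ k * x) y))"
        by (rule sum.cong[OF refl]) (rule key)
      show ?thesis unfolding Zinst_def S sum_distrib_left[symmetric] by (simp only: mult.left_commute)
    qed
  qed
  thus "\<exists>r>0. \<forall>x::complex. norm x < r \<longrightarrow>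
     Zinst (blowup_form B) (K, 1) chi (blowup_SW SW) Zp Zm (c1, - int l) x y =
       (if l = 0 then theta_A2_00 (x ^ 3) y / (etabar (x ^ 6)) ^ 3
        else theta_A2_10_cube x y / (etabar (x ^ 6)) ^ 3)
       * Zinst B K chi SW Zp Zm c1 x y" unfolding G_def .
qed


end
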